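(* Let $(\mathbf x,B)$ be a seed of $\mathcal F$ and assume that the cluster monomials of $\mathcal A(\mathbf x,B)$ are linearly independent over $K$. Let $(\mathbf y,C)$ be a seed mutation equivalent to $(\mathbf x,B)$ and let $(\mathbf z,D)=\mu_n\cdots\mu_2\mu_1(\mathbf y,C)$. Then the clusters $\mathbf y$ and $\mathbf z$ are disjoint, i.e. $\{y_1,\dots,y_n\}\cap\{z_1,\dots,z_n\}=\varnothing$.
   Context: Let $K$ be a field of characteristic $0$ or $K=\mathbb Z$. Fix integers $m\ge p\ge n\ge 1$ with $m>1$, and let $\mathcal F=K(X_1,\dots,X_m)$. For $B=(b_{ij})\in M_{m,n}(\mathbb Z)$ the principal part $B^\circ$ is the $n\times n$ matrix formed by the first $n$ rows. $B$ is connected if the graph with vertices $1,\dots,m$ and an edge between $i$ and $j$ whenever $b_{ij}\neq 0$ or $b_{ji}\ne 0$ is connected. A square integer matrix $A$ is skew-symmetrizable if $DA$ is skew-symmetric for some diagonal integer matrix $D$ with positive diagonal entries. A seed of $\mathcal F$ is a pair $(\mathbf x,B)$ where $B\in M_{m,n}(\mathbb Z)$ is connected with $B^\circ$ skew-symmetrizable, and $\mathbf x=(x_1,\dots,x_m)$ is an $m$-tuple of elements of $\mathcal F$ algebraically independent over $K$. For $1\le k\le n$ the mutation $\mu_k(\mathbf x,B)=(\mathbf x',B')$ is given by $b'_{ij}=-b_{ij}$ if $i=k$ or $j=k$, and $b'_{ij}=b_{ij}+\frac{|b_{ik}|b_{kj}+b_{ik}|b_{kj}|}{2}$ otherwise;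 $x'_s=x_s$ for $s\neq k$ and $x'_k=x_k^{-1}\big(\prod_{b_{ik}>0}x_i^{b_{ik}}+\prod_{b_{ik}<0}x_i^{-b_{ik}}\big)$. Two seeds are mutation equivalent if one is obtained from the other by a finite sequence of mutations $\mu_{i_1},\dots,\mu_{i_t}$ with $1\le i_j\le n$. The cluster algebra $\mathcal A(\mathbf x,B)$ is the $K$-subalgebra of $\mathcal F$ generated by $x_{n+1}^{\pm1},\dots,x_p^{\pm1},x_{p+1},\dots,x_m$ together with all elements $y_1,\dots,y_n$ for all seeds $(\mathbf y,C)$ mutation equivalent to $(\mathbf x,B)$; for such a seed, $\mathbf y$ is a cluster, and the elements $y_1^{a_1}\cdots y_m^{a_m}$ with all $a_i\ge 0$ (over all clusters $\mathbf y$) are the cluster monomials. *)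

theory Defs
  imports "HOL-Library.Poly_Mapping" "HOL-Computational_Algebra.Fraction_Field"
begin

text \<open>Multivariate polynomials over K in the variables X_0, X_1, ... (0-based indexing),
  and their fraction field. The ambient field F = K(X_0,...,X_(m-1)) is carried by the
  subset ratfun_field m of this fraction field. For K = Z the fraction field of Z[X] is Q(X).\<close>

type_synonym 'k mpoly = "(nat \<Rightarrow>\<^sub>0 nat) \<Rightarrow>\<^sub>0 'k"
type_synonym 'k ratfun = "'k mpoly fract"

definition mpoly_vars :: "'k::zero mpoly \<Rightarrow> nat set" where
  "mpoly_vars P = (\<Union>a\<in>Poly_Mapping.keys P. Poly_Mapping.keys (a :: nat \<Rightarrow>\<^sub>0 nat))"

definition const_rf :: "'k::idom \<Rightarrow> 'k ratfun" where
  "const_rf c = Fract (Poly_Mapping.single 0 c) 1"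

definition ratfun_field :: "nat \<Rightarrow> 'k::idom ratfun set" where
  "ratfun_field m = {Fract P Q | P Q. Q \<noteq> 0 \<and> mpoly_vars P \<subseteq> {..<m} \<and> mpoly_vars Q \<subseteq> {..<m}}"

definition mpoly_eval :: "'k::idom mpoly \<Rightarrow> (nat \<Rightarrow> 'k ratfun) \<Rightarrow> 'k ratfun" where
  "mpoly_eval P x = (\<Sum>a\<in>Poly_Mapping.keys P. const_rf (Poly_Mapping.lookup P a) * (\<Prod>i\<in>Poly_Mapping.keys a. x i ^ Poly_Mapping.lookup a i))"

definition alg_indep :: "nat \<Rightarrow> (nat \<Rightarrow> 'k::idom ratfun) \<Rightarrow> bool" where
  "alg_indep m x \<longleftrightarrow> (\<forall>P. mpoly_vars P \<subseteq> {..<m} \<longrightarrow> mpoly_eval P x = 0 \<longrightarrow> P = 0)"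

text \<open>Exchange matrices B: rows 0..m-1, columns 0..n-1 (entries outside are irrelevant).\<close>
definition connected_mat :: "nat \<Rightarrow> nat \<Rightarrow> (nat \<Rightarrow> nat \<Rightarrow> int) \<Rightarrow> bool" where
  "connected_mat m n B \<longleftrightarrow>
     (let E = {(i, j). i < m \<and> j < m \<and> ((j < n \<and> B i j \<noteq> 0) \<or> (i < n \<and> B j i \<noteq> 0))}
      in \<forall>i<m. \<forall>j<m. (i, j) \<in> E\<^sup>*)"

definition skew_symmetrizable :: "nat \<Rightarrow> (nat \<Rightarrow> nat \<Rightarrow> int) \<Rightarrow> bool" where
  "skew_symmetrizable n A \<longleftrightarrow>
     (\<exists>d::nat \<Rightarrow> int. (\<forall>i<n. d i > 0) \<and> (\<forall>i<n. \<forall>j<n. d i * A i j = - (d j * A j i)))"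

definition is_seed :: "nat \<Rightarrow> nat \<Rightarrow> (nat \<Rightarrow> 'k::idom ratfun) \<times> (nat \<Rightarrow> nat \<Rightarrow> int) \<Rightarrow> bool" where
  "is_seed m n s \<longleftrightarrow> connected_mat m n (snd s) \<and> skew_symmetrizable n (snd s)
     \<and> (\<forall>i<m. fst s i \<in> ratfun_field m) \<and> alg_indep m (fst s)"

definition mut_mat :: "nat \<Rightarrow> (nat \<Rightarrow> nat \<Rightarrow> int) \<Rightarrow> (nat \<Rightarrow> nat \<Rightarrow> int)" where
  "mut_mat k B = (\<lambda>i j. if i = k \<or> j = k then - B i j
      else B i j + (\<bar>B i k\<bar> * B k j + B i k * \<bar>B k j\<bar>) div 2)"

definition mut_cluster :: "nat \<Rightarrow> nat \<Rightarrow> (nat \<Rightarrow> nat \<Rightarrow> int) \<Rightarrow> (nat \<Rightarrow> 'k::idom ratfun) \<Rightarrow> (nat \<Rightarrow> 'k ratfun)" where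
  "mut_cluster m k B x = x(k := inverse (x k) *
      ((\<Prod>i\<in>{i. i < m \<and> B i k > 0}. x i ^ nat (B i k)) +
       (\<Prod>i\<in>{i. i < m \<and> B i k < 0}. x i ^ nat (- B i k))))"

definition mutate :: "nat \<Rightarrow> nat \<Rightarrow> (nat \<Rightarrow> 'k::idom ratfun) \<times> (nat \<Rightarrow> nat \<Rightarrow> int)
    \<Rightarrow> (nat \<Rightarrow> 'k ratfun) \<times> (nat \<Rightarrow> nat \<Rightarrow> int)" where
  "mutate m k s = (mut_cluster m k (snd s) (fst s), mut_mat k (snd s))"

inductive mut_equiv :: "nat \<Rightarrow> nat \<Rightarrow> (nat \<Rightarrow> 'k::idom ratfun) \<times> (nat \<Rightarrow> nat \<Rightarrow> int)
    \<Rightarrow> (nat \<Rightarrow> 'k ratfun) \<times> (nat \<Rightarrow> nat \<Rightarrow> int) \<Rightarrow> bool"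
  for m n s where
  refl: "mut_equiv m n s s"
| step: "mut_equiv m n s t \<Longrightarrow> k < n \<Longrightarrow> mut_equiv m n s (mutate m k t)"

definition cluster_monomials :: "nat \<Rightarrow> nat \<Rightarrow> (nat \<Rightarrow> 'k::idom ratfun) \<times> (nat \<Rightarrow> nat \<Rightarrow> int)
    \<Rightarrow> 'k ratfun set" where
  "cluster_monomials m n s =
     {\<Prod>i<m. y i ^ a i | y C a. mut_equiv m n s (y, C)}"

definition lin_indep_over_K :: "'k::idom ratfun set \<Rightarrow> bool" where
  "lin_indep_over_K S \<longleftrightarrow>
     (\<forall>T (c :: 'k ratfun \<Rightarrow> 'k). finite T \<longrightarrow> T \<subseteq> S \<longrightarrow>
        (\<Sum>u\<in>T. const_rf (c u) * u) = 0 \<longrightarrow> (\<forall>u\<in>T. c u = 0))"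

text \<open>K is a field of characteristic 0, or K is (isomorphic to) Z.\<close>
definition admissible_base :: "'k::idom itself \<Rightarrow> bool" where
  "admissible_base _ \<longleftrightarrow>
     (inj (of_nat :: nat \<Rightarrow> 'k) \<and> (\<forall>c::'k. c \<noteq> 0 \<longrightarrow> c dvd 1)) \<or> bij (of_int :: int \<Rightarrow> 'k)"

end

theory Submission
  imports Defs
begin

lemma const_rf_one: "const_rf 1 = (1 :: 'k::idom ratfun)"
  by (simp add: const_rf_def One_fract_def)

lemma const_rf_uminus: "const_rf (- c) = - (const_rf c :: 'k::idom ratfun)"
  by (simp add: const_rf_def single_uminus)

lemma const_rf_add: "const_rf (a + b) = const_rf a + (const_rf b :: 'k::idom ratfun)"
  by (simp add: const_rf_def single_add)

lemma const_rf_m2: "const_rf (- 2) = - 2 * (1 :: 'k::idom ratfun)"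
proof -
  have "const_rf (- 2 :: 'k) = - (const_rf 1 + const_rf 1)"
    by (metis const_rf_add const_rf_uminus one_add_one)
  thus ?thesis by (simp add: const_rf_one)
qed

lemma li_use:
  fixes S :: "'k::idom ratfun set"
  assumes "lin_indep_over_K S" "finite T" "T \<subseteq> S" "(\<Sum>u\<in>T. const_rf (c u) * u) = 0" "v \<in> T"
  shows "c v = 0"
proof -
  have "\<forall>T (c :: 'k ratfun \<Rightarrow> 'k). finite T \<longrightarrow> T \<subseteq> S \<longrightarrow>
        (\<Sum>u\<in>T. const_rf (c u) * u) = 0 \<longrightarrow> (\<forall>u\<in>T. c u = 0)"
    using assms(1) unfolding lin_indep_over_K_def .
  hence "finite T \<longrightarrow> T \<subseteq> S \<longrightarrow> (\<Sum>u\<in>T. const_rf (c u) * u) = 0 \<longrightarrow> (\<forall>u\<in>T. c u = 0)"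
    by (elim allE)
  thus ?thesis using assms(2-5) by simp
qed

lemma zero_notin:
  assumes "lin_indep_over_K (S :: 'k::idom ratfun set)"
  shows "0 \<notin> S"
proof
  assume "0 \<in> S"
  hence "(1::'k) = 0" using li_use[OF assms, of "{0}" "\<lambda>_. 1::'k" 0] by simp
  thus False by simp
qed

lemma no_sum:
  assumes L: "lin_indep_over_K (S :: 'k::idom ratfun set)"
    and u: "u \<in> S" and a: "a \<in> S" and b: "b \<in> S" and eq: "u = a + b"
  shows False
proof -
  have z: "0 \<notin> S" using zero_notin[OF L] .
  have a0: "a \<noteq> 0" and b0: "b \<noteq> 0" using a b z by auto
  have ua: "u \<noteq> a" using eq b0 by auto
  have ub: "u \<noteq> b" using eq a0 by auto
  show False
  proof (cases "a = b")
    case True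
    define c :: "'k ratfun \<Rightarrow> 'k" where "c = (\<lambda>v. if v = u then 1 else - 2)"
    have "(\<Sum>v\<in>{u, a}. const_rf (c v) * v) = 0"
      using ua True eq by (simp add: c_def const_rf_one const_rf_m2)
    with L u a have "c u = 0" by (intro li_use[OF L, of "{u,a}"]) auto
    thus False by (simp add: c_def)
  next
    case False
    define c :: "'k ratfun \<Rightarrow> 'k" where "c = (\<lambda>v. if v = u then 1 else - 1)"
    have "(\<Sum>v\<in>{u, a, b}. const_rf (c v) * v) = 0"
      using ua ub False eq by (simp add: c_def const_rf_one const_rf_uminus)
    with L u a b have "c u = 0" by (intro li_use[OF L, of "{u,a,b}"]) auto
    thus False by (simp add: c_def)
  qed
qed

definition W where "W m s k = foldl (\<lambda>s k. mutate m k s) s [0..<k]"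

lemma W_Suc: "W m s (Suc k) = mutate m k (W m s k)"
  by (simp add: W_def)

lemma W_low: "j \<ge> k \<Longrightarrow> fst (W m s k) j = fst s j"
  by (induction k) (auto simp: W_def mutate_def mut_cluster_def)

lemma W_high: "Suc j \<le> k \<Longrightarrow> fst (W m s k) j = fst (W m s (Suc j)) j"
proof (induction k rule: dec_induct)
  case base then show ?case by simp
next
  case (step k) then show ?case by (simp add: W_Suc mutate_def mut_cluster_def)
qed

lemma W_equiv: "mut_equiv m n s t \<Longrightarrow> k \<le> n \<Longrightarrow> mut_equiv m n s (W m t k)"
proof (induction k)
  case 0 then show ?case by (simp add: W_def)
next
  case (Suc k) then show ?case by (simp add: W_Suc mut_equiv.step)
qed

lemma in_cm: "mut_equiv m n s (w, D) \<Longrightarrow> (\<Prod>i<m. w i ^ a i) \<in> cluster_monomials m n s"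
  unfolding cluster_monomials_def by blast

lemma single_cm:
  assumes "mut_equiv m n s (w, D)" "j < m"
  shows "w j \<in> cluster_monomials m n s"
proof -
  have e: "(\<Prod>i<m. w i ^ (if i = j then 1 else 0)) = w j"
    using assms(2) by (simp add: if_distrib prod.delta cong: if_cong)
  show ?thesis using in_cm[OF assms(1), of "\<lambda>i. if i = j then 1 else 0"] unfolding e .
qed

lemma double_cm:
  assumes "mut_equiv m n s (w, D)" "j < m" "i < m"
  shows "w i * w j \<in> cluster_monomials m n s"
proof -
  have "(\<Prod>k<m. w k ^ ((if k = i then 1 else 0) + (if k = j then 1 else 0)))
      = (\<Prod>k<m. w k ^ (if k = i then 1 else 0) * w k ^ (if k = j then 1 else 0))"
    by (simp only: power_add)
  also have "\<dots> = (\<Prod>k<m. w k ^ (if k = i then 1 else 0)) * (\<Prod>k<m. w k ^ (if k = j then 1 else 0))"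
    by (rule prod.distrib)
  also have "\<dots> = w i * w j"
    using assms(2,3) by (simp add: if_distrib prod.delta cong: if_cong)
  finally have e: "(\<Prod>k<m. w k ^ ((if k = i then 1 else 0) + (if k = j then 1 else 0))) = w i * w j" .
  show ?thesis using in_cm[OF assms(1), of "\<lambda>k. (if k = i then 1 else 0) + (if k = j then 1 else 0)"]
    unfolding e .
qed

lemma filt_cm:
  assumes "mut_equiv m n s (w, D)"
  shows "(\<Prod>i\<in>{i. i < m \<and> P i}. w i ^ e i) \<in> cluster_monomials m n s"
proof -
  have "{i. i < m \<and> P i} = {i\<in>{..<m}. P i}" by auto
  hence "(\<Prod>i\<in>{i. i < m \<and> P i}. w i ^ e i) = (\<Prod>i\<in>{i\<in>{..<m}. P i}. w i ^ e i)"
    by simp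
  also have "\<dots> = (\<Prod>i<m. if P i then w i ^ e i else 1)"
    by (rule prod.inter_filter) simp
  also have "\<dots> = (\<Prod>i<m. w i ^ (if P i then e i else 0))"
    by (rule prod.cong) auto
  finally have e: "(\<Prod>i\<in>{i. i < m \<and> P i}. w i ^ e i) = (\<Prod>i<m. w i ^ (if P i then e i else 0))" .
  show ?thesis unfolding e by (rule in_cm[OF assms])
qed

theorem proposition4p3:
  fixes m p n :: nat
    and x :: "nat \<Rightarrow> 'k::idom ratfun" and B :: "nat \<Rightarrow> nat \<Rightarrow> int"
    and y :: "nat \<Rightarrow> 'k ratfun" and C :: "nat \<Rightarrow> nat \<Rightarrow> int"
  assumes K: "admissible_base TYPE('k)"
    and dims: "1 \<le> n" "n \<le> p" "p \<le> m" "1 < m"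
    and seed: "is_seed m n (x, B)"
    and indep: "lin_indep_over_K (cluster_monomials m n (x, B))"
    and equiv: "mut_equiv m n (x, B) (y, C)"
  shows "{y i | i. i < n} \<inter> {fst (foldl (\<lambda>s k. mutate m k s) (y, C) [0..<n]) i | i. i < n} = {}"
proof (rule ccontr)
  assume "\<not> ?thesis"
  then obtain i j where ij: "i < n" "j < n" and eq0: "y i = fst (W m (y, C) n) j"
    unfolding W_def by blast
  let ?S = "cluster_monomials m n (x, B)"
  have jm: "j < m" and im: "i < m" using ij dims by auto
  obtain w D where wD: "W m (y, C) j = (w, D)" by (cases "W m (y, C) j")
  have ewD: "mut_equiv m n (x, B) (w, D)" using W_equiv[OF equiv, of j] ij wD by simp
  have wj: "w j = y j" using W_low[of j j m "(y, C)"] wD by simp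
  define P1 where "P1 = (\<Prod>k\<in>{k. k < m \<and> D k j > 0}. w k ^ nat (D k j))"
  define P2 where "P2 = (\<Prod>k\<in>{k. k < m \<and> D k j < 0}. w k ^ nat (- D k j))"
  have "fst (W m (y, C) n) j = fst (W m (y, C) (Suc j)) j" using W_high[of j n] ij by simp
  also have "\<dots> = inverse (y j) * (P1 + P2)"
    using wD wj by (simp add: W_Suc mutate_def mut_cluster_def P1_def P2_def)
  finally have eq1: "y i = inverse (y j) * (P1 + P2)" using eq0 by simp
  have yjS: "y j \<in> ?S" using single_cm[OF equiv jm] .
  hence "y j \<noteq> 0" using zero_notin[OF indep] by auto
  hence eq2: "y i * y j = P1 + P2" using eq1 by (simp add: field_simps)
  show False
  proof (rule no_sum[OF indep double_cm[OF equiv jm im] _ _ eq2])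
    show "P1 \<in> ?S" unfolding P1_def by (rule filt_cm[OF ewD])
    show "P2 \<in> ?S" unfolding P2_def by (rule filt_cm[OF ewD])
  qed
qed

end
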